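(* Assume $m_1=1$ and $q_j(t)=e^{tJ}a_j$, $j=1,\dots,n$, where $a_j\in\mathbb R^2$ satisfy $a_j=\sum_{k\ne j}m_k\frac{a_j-a_k}{\|a_j-a_k\|^{\alpha+1}}$. Let $\varepsilon\in(0,1)$, $\omega=\varepsilon^{-(\alpha+1)/2}$, and $\nu>0$ with $(\omega-1)/\nu=\mathfrak p\in\mathbb Z$. Let $x_j(\tau)=e^{-J\omega\tau/\nu}q_j(\tau/\nu)$, $y_j=x_1-x_j$, and let $h$ be defined by $h(x,\tau)=\varepsilon^{\alpha-1}\sum_{j=2}^n m_j\big[\phi_\alpha(\|y_j(\tau)+\varepsilon x\|)+\frac{y_j(\tau)}{\|y_j(\tau)\|^{\alpha+1}}\cdot\varepsilon x\big]$ if $\alpha>1$, and $h(x,\tau)=\sum_{j=2}^n m_j\big[-\log\frac{\|y_j(\tau)+\varepsilon x\|}{\|y_j(\tau)\|}+\frac{y_j(\tau)}{\|y_j(\tau)\|^2}\cdot\varepsilon x\big]$ if $\alpha=1$. Then $h(x,\tau)$ is $2\pi$-periodic in $\tau$, $\nabla_xh(x,\tau)=\mathcal O(\varepsilon^{\alpha+1})$, and $\nu/\omega=(1-\varepsilon^{(\alpha+1)/2})/\mathfrak p$.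
   Context: $n\ge2$, $\alpha\ge1$, masses $m_1,\dots,m_n>0$. $\phi_\alpha(\lambda)=\frac1{\alpha-1}\lambda^{1-\alpha}$ for $\alpha>1$, $\phi_1(\lambda)=-\log\lambda$. $J=\begin{pmatrix}0&1\\-1&0\end{pmatrix}$, $e^{J\theta}=\cos\theta\,I+\sin\theta\,J$, $\|\cdot\|$ the Euclidean norm. The estimate $\mathcal O(\varepsilon^{\alpha+1})$ is meant as $\varepsilon\to0$, uniformly in $\tau$ and in $x$ in bounded sets. *)

theory Defs
  imports "HOL-Analysis.Analysis"
begin

definition Jmat :: "real^2^2" where
  "Jmat = (\<chi> i j. if i = 1 \<and> j = 2 then 1 else if i = 2 \<and> j = 1 then -1 else 0)"

text \<open>e^{J theta} = cos theta I + sin theta J.\<close>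
definition rotJ :: "real \<Rightarrow> real^2^2" where
  "rotJ \<theta> = cos \<theta> *\<^sub>R mat 1 + sin \<theta> *\<^sub>R Jmat"

definition phi :: "real \<Rightarrow> real \<Rightarrow> real" where
  "phi \<alpha> r = (if \<alpha> = 1 then - ln r else (1 / (\<alpha> - 1)) * r powr (1 - \<alpha>))"

definition omega :: "real \<Rightarrow> real \<Rightarrow> real" where
  "omega \<alpha> \<epsilon> = \<epsilon> powr (- (\<alpha> + 1) / 2)"

definition qpos :: "(nat \<Rightarrow> real^2) \<Rightarrow> nat \<Rightarrow> real \<Rightarrow> real^2" where
  "qpos a j t = rotJ t *v a j"

definition xpos :: "real \<Rightarrow> (nat \<Rightarrow> real^2) \<Rightarrow> real \<Rightarrow> real \<Rightarrow> nat \<Rightarrow> real \<Rightarrow> real^2" where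
  "xpos \<alpha> a \<epsilon> \<nu> j \<tau> = rotJ (- (omega \<alpha> \<epsilon> * \<tau> / \<nu>)) *v qpos a j (\<tau> / \<nu>)"

definition ypos :: "real \<Rightarrow> (nat \<Rightarrow> real^2) \<Rightarrow> real \<Rightarrow> real \<Rightarrow> nat \<Rightarrow> real \<Rightarrow> real^2" where
  "ypos \<alpha> a \<epsilon> \<nu> j \<tau> = xpos \<alpha> a \<epsilon> \<nu> 1 \<tau> - xpos \<alpha> a \<epsilon> \<nu> j \<tau>"

definition hfun :: "nat \<Rightarrow> real \<Rightarrow> (nat \<Rightarrow> real) \<Rightarrow> (nat \<Rightarrow> real^2) \<Rightarrow> real \<Rightarrow> real
    \<Rightarrow> real^2 \<Rightarrow> real \<Rightarrow> real" where
  "hfun n \<alpha> m a \<epsilon> \<nu> x \<tau> =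
    (if \<alpha> > 1 then
       \<epsilon> powr (\<alpha> - 1) * (\<Sum>j\<in>{2..n}. m j *
         (phi \<alpha> (norm (ypos \<alpha> a \<epsilon> \<nu> j \<tau> + \<epsilon> *\<^sub>R x))
          + ((1 / norm (ypos \<alpha> a \<epsilon> \<nu> j \<tau>) powr (\<alpha> + 1)) *\<^sub>R ypos \<alpha> a \<epsilon> \<nu> j \<tau>) \<bullet> (\<epsilon> *\<^sub>R x)))
     else
       (\<Sum>j\<in>{2..n}. m j *
         (- ln (norm (ypos \<alpha> a \<epsilon> \<nu> j \<tau> + \<epsilon> *\<^sub>R x) / norm (ypos \<alpha> a \<epsilon> \<nu> j \<tau>))
          + ((1 / norm (ypos \<alpha> a \<epsilon> \<nu> j \<tau>)^2) *\<^sub>R ypos \<alpha> a \<epsilon> \<nu> j \<tau>) \<bullet> (\<epsilon> *\<^sub>R x))))"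

end

theory Submission
  imports Defs
begin


lemma rotJ_comp1: "(rotJ t *v v) $ 1 = cos t * v$1 + sin t * v$2"
  by (simp add: rotJ_def Jmat_def matrix_vector_mult_def sum_2 mat_def)
lemma rotJ_comp2: "(rotJ t *v v) $ 2 = - sin t * v$1 + cos t * v$2"
  by (simp add: rotJ_def Jmat_def matrix_vector_mult_def sum_2 mat_def)

lemma rotJ_rotJ: "rotJ s *v (rotJ t *v v) = rotJ (s+t) *v v"
  unfolding vec_eq_iff forall_2 rotJ_comp1 rotJ_comp2
  by (simp add: cos_add sin_add algebra_simps)

lemma norm_rotJ: "norm (rotJ t *v v) = norm v"
proof -
  have "(rotJ t *v v) \<bullet> (rotJ t *v v) = v \<bullet> v"
  proof -
    have "\<And>c s a b::real. (c*a + s*b)*(c*a+s*b) + (-s*a+c*b)*(-s*a+c*b) = (s^2+c^2)*(a*a+b*b)"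
      by (simp add: power2_eq_square algebra_simps)
    thus ?thesis by (simp add: rotJ_comp1 rotJ_comp2 sum_2 inner_vec_def)
  qed
  thus ?thesis by (simp add: norm_eq_sqrt_inner)
qed

lemma rotJ_diff: "rotJ s *v v - rotJ s *v w = rotJ s *v (v - w)"
  by (simp add: matrix_vector_right_distrib[symmetric] algebra_simps)

lemma rotJ_per: "rotJ (- (of_int p * (\<tau> + 2*pi))) = rotJ (- (of_int p * \<tau>))"
proof -
  have e: "- (of_int p * (\<tau> + 2*pi)) = - (of_int p * \<tau>) - (2*pi) * of_int p" by (simp add: algebra_simps)
  show ?thesis unfolding rotJ_def e cos_diff sin_diff by simp
qed

definition Gf :: "real \<Rightarrow> real^2 \<Rightarrow> real^2" where
  "Gf \<alpha> v = (norm v powr (-(\<alpha>+1))) *\<^sub>R v"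

lemma norm_aff_deriv:
  fixes y x :: "real^2"
  assumes w: "y + \<epsilon> *\<^sub>R x \<noteq> 0"
  shows "((\<lambda>z. norm (y + \<epsilon> *\<^sub>R z)) has_derivative (\<lambda>h. (\<epsilon> *\<^sub>R h) \<bullet> sgn (y + \<epsilon> *\<^sub>R x))) (at x)"
proof -
  have L: "((\<lambda>z. y + \<epsilon> *\<^sub>R z) has_derivative (\<lambda>h. \<epsilon> *\<^sub>R h)) (at x)"
    by (auto intro!: derivative_eq_intros)
  show ?thesis using has_derivative_compose[OF L has_derivative_norm[OF w]] by simp
qed

lemma aux_gt:
  fixes w h :: "real^2"
  assumes r: "norm w > 0" and a1: "\<alpha> > 1"
  shows "(1/(\<alpha>-1)) * (norm w powr (1-\<alpha>) * (0 * ln (norm w) + (\<epsilon> *\<^sub>R h) \<bullet> sgn w * (1-\<alpha>) / norm w))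
        = - \<epsilon> * (norm w powr (1-\<alpha>) / norm w / norm w) * (h \<bullet> w)"
proof -
  have e1: "(\<epsilon> *\<^sub>R h) \<bullet> sgn w = \<epsilon> * (h \<bullet> w) / norm w" by (simp add: sgn_div_norm inner_commute divide_inverse mult_ac)
  have ne: "\<alpha> - 1 \<noteq> 0" using a1 by simp
  show ?thesis unfolding e1 using r ne by (simp add: field_simps)
qed

lemma summand_gt:
  fixes y x :: "real^2"
  assumes w: "y + \<epsilon> *\<^sub>R x \<noteq> 0" and a1: "\<alpha> > 1" and y: "y \<noteq> 0"
  shows "((\<lambda>z. phi \<alpha> (norm (y + \<epsilon> *\<^sub>R z)) + ((1 / norm y powr (\<alpha> + 1)) *\<^sub>R y) \<bullet> (\<epsilon> *\<^sub>R z))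
     has_derivative (\<lambda>h. h \<bullet> (\<epsilon> *\<^sub>R (Gf \<alpha> y - Gf \<alpha> (y + \<epsilon> *\<^sub>R x))))) (at x)"
proof -
  let ?w = "y + \<epsilon> *\<^sub>R x"
  let ?r = "norm ?w"
  have r: "?r > 0" using w by simp
  have fe: "(\<lambda>z. phi \<alpha> (norm (y + \<epsilon> *\<^sub>R z)) + ((1 / norm y powr (\<alpha> + 1)) *\<^sub>R y) \<bullet> (\<epsilon> *\<^sub>R z))
     = (\<lambda>z. (1/(\<alpha>-1)) * norm (y + \<epsilon> *\<^sub>R z) powr (1-\<alpha>) + ((1 / norm y powr (\<alpha> + 1)) *\<^sub>R y) \<bullet> (\<epsilon> *\<^sub>R z))"
    using a1 by (simp add: phi_def)
  have P: "((\<lambda>z. norm (y + \<epsilon> *\<^sub>R z) powr (1-\<alpha>)) has_derivative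
     (\<lambda>h. ?r powr (1-\<alpha>) * (0 * ln ?r + (\<epsilon> *\<^sub>R h) \<bullet> sgn ?w * (1-\<alpha>) / ?r))) (at x)"
    using has_derivative_powr[OF norm_aff_deriv[OF w] has_derivative_const r] by simp
  have D: "((\<lambda>z. (1/(\<alpha>-1)) * norm (y + \<epsilon> *\<^sub>R z) powr (1-\<alpha>) + ((1 / norm y powr (\<alpha> + 1)) *\<^sub>R y) \<bullet> (\<epsilon> *\<^sub>R z))
     has_derivative (\<lambda>h. (1/(\<alpha>-1)) * (?r powr (1-\<alpha>) * (0 * ln ?r + (\<epsilon> *\<^sub>R h) \<bullet> sgn ?w * (1-\<alpha>) / ?r))
          + ((1 / norm y powr (\<alpha> + 1)) *\<^sub>R y) \<bullet> (\<epsilon> *\<^sub>R h))) (at x)"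
    by (intro has_derivative_add has_derivative_mult_right P has_derivative_inner_right
         has_derivative_scaleR_right has_derivative_ident)
  have pw: "?r powr (1-\<alpha>) / ?r / ?r = ?r powr (-(\<alpha>+1))"
  proof -
    have "?r powr (-(\<alpha>+1)) * ?r powr 2 = ?r powr (-(\<alpha>+1) + 2)"
      by (rule powr_add[symmetric])
    also have "-(\<alpha>+1) + 2 = 1 - \<alpha>" by simp
    finally have "?r powr (1-\<alpha>) = ?r powr (-(\<alpha>+1)) * ?r powr 2" by simp
    thus ?thesis using r by (simp add: powr_numeral power2_eq_square)
  qed
  have eq: "(\<lambda>h. (1/(\<alpha>-1)) * (?r powr (1-\<alpha>) * (0 * ln ?r + (\<epsilon> *\<^sub>R h) \<bullet> sgn ?w * (1-\<alpha>) / ?r))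
          + ((1 / norm y powr (\<alpha> + 1)) *\<^sub>R y) \<bullet> (\<epsilon> *\<^sub>R h))
     = (\<lambda>h. h \<bullet> (\<epsilon> *\<^sub>R (Gf \<alpha> y - Gf \<alpha> ?w)))"
  proof
    fix h :: "real^2"
    have "(1/(\<alpha>-1)) * (?r powr (1-\<alpha>) * (0 * ln ?r + (\<epsilon> *\<^sub>R h) \<bullet> sgn ?w * (1-\<alpha>) / ?r))
        = - \<epsilon> * (?r powr (1-\<alpha>) / ?r / ?r) * (h \<bullet> ?w)"
      using aux_gt[OF r a1] by simp
    also have "\<dots> = - (h \<bullet> (\<epsilon> *\<^sub>R Gf \<alpha> ?w))" unfolding pw Gf_def by simp
    finally have 1: "(1/(\<alpha>-1)) * (?r powr (1-\<alpha>) * (0 * ln ?r + (\<epsilon> *\<^sub>R h) \<bullet> sgn ?w * (1-\<alpha>) / ?r))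
        = - (h \<bullet> (\<epsilon> *\<^sub>R Gf \<alpha> ?w))" .
    have 2: "((1 / norm y powr (\<alpha> + 1)) *\<^sub>R y) \<bullet> (\<epsilon> *\<^sub>R h) = h \<bullet> (\<epsilon> *\<^sub>R Gf \<alpha> y)"
      unfolding Gf_def powr_minus_divide by (simp add: inner_commute)
    show "(1/(\<alpha>-1)) * (?r powr (1-\<alpha>) * (0 * ln ?r + (\<epsilon> *\<^sub>R h) \<bullet> sgn ?w * (1-\<alpha>) / ?r))
          + ((1 / norm y powr (\<alpha> + 1)) *\<^sub>R y) \<bullet> (\<epsilon> *\<^sub>R h) = h \<bullet> (\<epsilon> *\<^sub>R (Gf \<alpha> y - Gf \<alpha> ?w))"
      unfolding 1 2 by (simp add: inner_diff_right right_diff_distrib)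
  qed
  show ?thesis unfolding fe using D unfolding eq .
qed

lemma aux_ln:
  fixes w y h :: "real^2"
  assumes r: "norm w > 0" and yp: "norm y > 0"
  shows "- ((\<epsilon> *\<^sub>R h) \<bullet> sgn w / norm y * inverse (norm w / norm y)) = - (h \<bullet> (\<epsilon> *\<^sub>R ((1/ norm w ^2) *\<^sub>R w)))"
  using r yp by (simp add: sgn_div_norm field_simps power2_eq_square inner_commute)

lemma summand_eq1:
  fixes y x :: "real^2"
  assumes w: "y + \<epsilon> *\<^sub>R x \<noteq> 0" and y: "y \<noteq> 0"
  shows "((\<lambda>z. - ln (norm (y + \<epsilon> *\<^sub>R z) / norm y) + ((1 / norm y ^ 2) *\<^sub>R y) \<bullet> (\<epsilon> *\<^sub>R z))
     has_derivative (\<lambda>h. h \<bullet> (\<epsilon> *\<^sub>R (Gf 1 y - Gf 1 (y + \<epsilon> *\<^sub>R x))))) (at x)"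
proof -
  let ?w = "y + \<epsilon> *\<^sub>R x"
  let ?r = "norm ?w"
  have r: "?r > 0" using w by simp
  have yp: "norm y > 0" using y by simp
  have Q: "((\<lambda>z. norm (y + \<epsilon> *\<^sub>R z) / norm y) has_derivative (\<lambda>h. (\<epsilon> *\<^sub>R h) \<bullet> sgn ?w / norm y)) (at x)"
    using has_derivative_divide'[OF norm_aff_deriv[OF w] has_derivative_const, of "norm y"] yp by simp
  have L: "((\<lambda>z. ln (norm (y + \<epsilon> *\<^sub>R z) / norm y)) has_derivative (\<lambda>h. (\<epsilon> *\<^sub>R h) \<bullet> sgn ?w / norm y * inverse (?r / norm y))) (at x)"
    using DERIV_ln[THEN DERIV_compose_FDERIV, OF _ Q] r yp by simp
  have D: "((\<lambda>z. - ln (norm (y + \<epsilon> *\<^sub>R z) / norm y) + ((1 / norm y ^ 2) *\<^sub>R y) \<bullet> (\<epsilon> *\<^sub>R z))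
     has_derivative (\<lambda>h. - ((\<epsilon> *\<^sub>R h) \<bullet> sgn ?w / norm y * inverse (?r / norm y)) + ((1 / norm y ^ 2) *\<^sub>R y) \<bullet> (\<epsilon> *\<^sub>R h))) (at x)"
    by (intro has_derivative_add has_derivative_minus L has_derivative_inner_right
         has_derivative_scaleR_right has_derivative_ident)
  have eq: "(\<lambda>h. - ((\<epsilon> *\<^sub>R h) \<bullet> sgn ?w / norm y * inverse (?r / norm y)) + ((1 / norm y ^ 2) *\<^sub>R y) \<bullet> (\<epsilon> *\<^sub>R h))
     = (\<lambda>h. h \<bullet> (\<epsilon> *\<^sub>R (Gf 1 y - Gf 1 ?w)))"
  proof
    fix h :: "real^2"
    have p2: "\<And>t::real. t > 0 \<Longrightarrow> t powr (-(1+1)) = 1 / t^2"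
      by (simp add: powr_minus_divide power2_eq_square powr_add)
    show "- ((\<epsilon> *\<^sub>R h) \<bullet> sgn ?w / norm y * inverse (?r / norm y)) + ((1 / norm y ^ 2) *\<^sub>R y) \<bullet> (\<epsilon> *\<^sub>R h)
       = h \<bullet> (\<epsilon> *\<^sub>R (Gf 1 y - Gf 1 ?w))"
      unfolding Gf_def p2[OF r] p2[OF yp] aux_ln[OF r yp]
      by (simp add: inner_diff_right inner_commute right_diff_distrib)
  qed
  show ?thesis using D unfolding eq .
qed

lemma Gf_deriv:
  fixes v :: "real^2"
  assumes v: "v \<noteq> 0"
  shows "(Gf \<alpha> has_derivative (\<lambda>h. (norm v powr (-(\<alpha>+1))) *\<^sub>R h +
      (norm v powr (-(\<alpha>+1)) * (0 * ln (norm v) + (h \<bullet> sgn v) * (-(\<alpha>+1)) / norm v)) *\<^sub>R v)) (at v within S)"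
proof -
  have r: "norm v > 0" using v by simp
  have N: "(norm has_derivative (\<lambda>h. h \<bullet> sgn v)) (at v)"
    using has_derivative_norm[OF v] by blast
  have P: "((\<lambda>u. norm u powr (-(\<alpha>+1))) has_derivative
     (\<lambda>h. norm v powr (-(\<alpha>+1)) * (0 * ln (norm v) + (h \<bullet> sgn v) * (-(\<alpha>+1)) / norm v))) (at v)"
    using has_derivative_powr[OF N has_derivative_const r UNIV_I] by simp
  have "((\<lambda>u. norm u powr (-(\<alpha>+1)) *\<^sub>R u) has_derivative (\<lambda>h. (norm v powr (-(\<alpha>+1))) *\<^sub>R h +
      (norm v powr (-(\<alpha>+1)) * (0 * ln (norm v) + (h \<bullet> sgn v) * (-(\<alpha>+1)) / norm v)) *\<^sub>R v)) (at v)"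
    by (rule has_derivative_scaleR[OF P has_derivative_ident])
  thus ?thesis unfolding Gf_def[abs_def] by (rule has_derivative_at_withinI)
qed

lemma Gf_deriv_bound:
  fixes v h :: "real^2"
  assumes v: "norm v \<ge> \<rho>" and rho: "\<rho> > 0" and a: "\<alpha> \<ge> 1"
  shows "norm ((norm v powr (-(\<alpha>+1))) *\<^sub>R h +
      (norm v powr (-(\<alpha>+1)) * (0 * ln (norm v) + (h \<bullet> sgn v) * (-(\<alpha>+1)) / norm v)) *\<^sub>R v)
     \<le> ((\<alpha>+2) * \<rho> powr (-(\<alpha>+1))) * norm h"
proof -
  let ?c = "norm v powr (-(\<alpha>+1))"
  have r: "norm v > 0" using v rho by linarith
  have c0: "?c \<ge> 0" by simp
  have cb: "?c \<le> \<rho> powr (-(\<alpha>+1))" by (rule powr_mono2') (use a rho v in auto)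
  have ib: "\<bar>h \<bullet> sgn v\<bar> \<le> norm h"
    using Cauchy_Schwarz_ineq2[of h "sgn v"] r by (simp add: norm_sgn)
  have "norm ((?c * (0 * ln (norm v) + (h \<bullet> sgn v) * (-(\<alpha>+1)) / norm v)) *\<^sub>R v)
      = ?c * \<bar>h \<bullet> sgn v\<bar> * (\<alpha>+1)"
  proof -
    have e: "(?c * (0 * ln (norm v) + (h \<bullet> sgn v) * (-(\<alpha>+1)) / norm v)) * norm v = - (?c * (h \<bullet> sgn v) * (\<alpha>+1))"
      using r by (simp add: field_simps)
    have "norm ((?c * (0 * ln (norm v) + (h \<bullet> sgn v) * (-(\<alpha>+1)) / norm v)) *\<^sub>R v)
       = \<bar>(?c * (0 * ln (norm v) + (h \<bullet> sgn v) * (-(\<alpha>+1)) / norm v)) * norm v\<bar>"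
      by (simp add: abs_mult)
    also have "\<dots> = ?c * \<bar>h \<bullet> sgn v\<bar> * (\<alpha>+1)" unfolding e using c0 a by (simp add: abs_mult)
    finally show ?thesis .
  qed
  also have "\<dots> \<le> ?c * norm h * (\<alpha>+1)"
    using ib c0 a by (intro mult_right_mono mult_left_mono) auto
  finally have 1: "norm ((?c * (0 * ln (norm v) + (h \<bullet> sgn v) * (-(\<alpha>+1)) / norm v)) *\<^sub>R v) \<le> ?c * norm h * (\<alpha>+1)" .
  have 2: "norm (?c *\<^sub>R h) = ?c * norm h" using c0 by simp
  have "norm (?c *\<^sub>R h + (?c * (0 * ln (norm v) + (h \<bullet> sgn v) * (-(\<alpha>+1)) / norm v)) *\<^sub>R v)
     \<le> ?c * norm h + ?c * norm h * (\<alpha>+1)"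
    using norm_triangle_ineq[of "?c *\<^sub>R h" "(?c * (0 * ln (norm v) + (h \<bullet> sgn v) * (-(\<alpha>+1)) / norm v)) *\<^sub>R v"] 1 2 by linarith
  also have "\<dots> = (\<alpha>+2) * ?c * norm h" by (simp add: algebra_simps)
  also have "\<dots> \<le> (\<alpha>+2) * \<rho> powr (-(\<alpha>+1)) * norm h"
    using cb a by (intro mult_right_mono mult_left_mono) auto
  finally show ?thesis by simp
qed

lemma Gf_lip:
  fixes y w :: "real^2"
  assumes a: "\<alpha> \<ge> 1" and rho: "\<rho> > 0" and y: "norm y \<ge> 2*\<rho>" and w: "norm (w - y) \<le> \<rho>"
  shows "norm (Gf \<alpha> y - Gf \<alpha> w) \<le> ((\<alpha>+2) * \<rho> powr (-(\<alpha>+1))) * norm (w - y)"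
proof -
  have inS: "norm v \<ge> \<rho>" if "v \<in> cball y \<rho>" for v
  proof -
    have "dist y v \<le> \<rho>" using that by simp
    hence "norm (y - v) \<le> \<rho>" by (simp add: dist_norm)
    thus ?thesis using y norm_triangle_ineq2[of y v] by linarith
  qed
  have "norm (Gf \<alpha> y - Gf \<alpha> w) \<le> ((\<alpha>+2) * \<rho> powr (-(\<alpha>+1))) * norm (y - w)"
  proof (rule differentiable_bound[where S="cball y \<rho>"])
    show "convex (cball y \<rho>)" by simp
    fix v assume v: "v \<in> cball y \<rho>"
    have "v \<noteq> 0" using inS[OF v] rho by auto
    thus "(Gf \<alpha> has_derivative (\<lambda>h. (norm v powr (-(\<alpha>+1))) *\<^sub>R h +
      (norm v powr (-(\<alpha>+1)) * (0 * ln (norm v) + (h \<bullet> sgn v) * (-(\<alpha>+1)) / norm v)) *\<^sub>R v)) (at v within cball y \<rho>)"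
      by (rule Gf_deriv)
    show "onorm (\<lambda>h. (norm v powr (-(\<alpha>+1))) *\<^sub>R h +
      (norm v powr (-(\<alpha>+1)) * (0 * ln (norm v) + (h \<bullet> sgn v) * (-(\<alpha>+1)) / norm v)) *\<^sub>R v) \<le> (\<alpha>+2) * \<rho> powr (-(\<alpha>+1))"
      by (rule onorm_le, rule Gf_deriv_bound[OF inS[OF v] rho a])
  next
    show "y \<in> cball y \<rho>" using rho by simp
    show "w \<in> cball y \<rho>" using w by (simp add: dist_norm norm_minus_commute)
  qed
  thus ?thesis by (simp add: norm_minus_commute)
qed

lemma xpos_eq:
  assumes nu: "\<nu> > 0" and hp: "(omega \<alpha> \<epsilon> - 1) / \<nu> = of_int p"
  shows "xpos \<alpha> a \<epsilon> \<nu> j \<tau> = rotJ (- (of_int p * \<tau>)) *v a j"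
proof -
  have "- (omega \<alpha> \<epsilon> * \<tau> / \<nu>) + \<tau> / \<nu> = - ((omega \<alpha> \<epsilon> - 1) / \<nu> * \<tau>)"
    using nu by (simp add: field_simps)
  also have "\<dots> = - (of_int p * \<tau>)" by (simp add: hp)
  finally have e: "- (omega \<alpha> \<epsilon> * \<tau> / \<nu>) + \<tau> / \<nu> = - (of_int p * \<tau>)" .
  show ?thesis unfolding xpos_def qpos_def rotJ_rotJ e ..
qed

lemma ypos_eq:
  assumes nu: "\<nu> > 0" and hp: "(omega \<alpha> \<epsilon> - 1) / \<nu> = of_int p"
  shows "ypos \<alpha> a \<epsilon> \<nu> j \<tau> = rotJ (- (of_int p * \<tau>)) *v (a 1 - a j)"
  unfolding ypos_def xpos_eq[OF nu hp] rotJ_diff ..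

lemma omega_gt1:
  assumes "0 < \<epsilon>" "\<epsilon> < 1" "\<alpha> \<ge> 1"
  shows "omega \<alpha> \<epsilon> > 1"
proof -
  have "1 powr (-(\<alpha>+1)/2) < \<epsilon> powr (-(\<alpha>+1)/2)"
    by (rule powr_less_mono2_neg) (use assms in auto)
  thus ?thesis by (simp add: omega_def)
qed

theorem proposition4:
  fixes n :: nat and \<alpha> :: real and m :: "nat \<Rightarrow> real" and a :: "nat \<Rightarrow> real^2"
  assumes n2: "n \<ge> 2"
    and alpha: "\<alpha> \<ge> 1"
    and mpos: "\<forall>j\<in>{1..n}. m j > 0"
    and m1: "m 1 = 1"
    and distinct: "\<forall>j\<in>{1..n}. \<forall>k\<in>{1..n}. j \<noteq> k \<longrightarrow> a j \<noteq> a k"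
    and cc: "\<forall>j\<in>{1..n}. a j =
              (\<Sum>k\<in>{1..n} - {j}. (m k / norm (a j - a k) powr (\<alpha> + 1)) *\<^sub>R (a j - a k))"
  shows
    "(\<forall>\<epsilon> \<nu> (p::int). 0 < \<epsilon> \<and> \<epsilon> < 1 \<and> \<nu> > 0 \<and> (omega \<alpha> \<epsilon> - 1) / \<nu> = of_int p \<longrightarrow>
        (\<forall>x \<tau>. hfun n \<alpha> m a \<epsilon> \<nu> x (\<tau> + 2 * pi) = hfun n \<alpha> m a \<epsilon> \<nu> x \<tau>)
        \<and> \<nu> / omega \<alpha> \<epsilon> = (1 - \<epsilon> powr ((\<alpha> + 1) / 2)) / of_int p)
     \<and> (\<forall>R. \<exists>C \<epsilon>0. \<epsilon>0 > 0 \<and>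
          (\<forall>\<epsilon> \<nu> (p::int) x \<tau>. 0 < \<epsilon> \<and> \<epsilon> < \<epsilon>0 \<and> \<epsilon> < 1 \<and> \<nu> > 0
             \<and> (omega \<alpha> \<epsilon> - 1) / \<nu> = of_int p \<and> norm x \<le> R \<longrightarrow>
             (\<exists>g. GDERIV (\<lambda>z. hfun n \<alpha> m a \<epsilon> \<nu> z \<tau>) x :> g
                  \<and> norm g \<le> C * \<epsilon> powr (\<alpha> + 1))))"
proof (rule conjI; intro allI impI)
  fix \<epsilon> \<nu> :: real and p :: int
  assume H: "0 < \<epsilon> \<and> \<epsilon> < 1 \<and> \<nu> > 0 \<and> (omega \<alpha> \<epsilon> - 1) / \<nu> = of_int p"
  hence nu: "\<nu> > 0" and hp: "(omega \<alpha> \<epsilon> - 1) / \<nu> = of_int p" by auto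
  have P1: "\<forall>x \<tau>. hfun n \<alpha> m a \<epsilon> \<nu> x (\<tau> + 2 * pi) = hfun n \<alpha> m a \<epsilon> \<nu> x \<tau>"
    by (simp only: hfun_def ypos_eq[OF nu hp] rotJ_per) simp
  have om: "omega \<alpha> \<epsilon> > 1" using omega_gt1 H alpha by auto
  have hp2: "omega \<alpha> \<epsilon> - 1 = of_int p * \<nu>" using hp nu by (simp add: field_simps)
  hence p0: "of_int p \<noteq> (0::real)" using om by auto
  have inv: "1 / omega \<alpha> \<epsilon> = \<epsilon> powr ((\<alpha> + 1) / 2)"
    unfolding omega_def by (simp add: powr_minus_divide[symmetric] minus_divide_left add.commute)
  have "\<nu> = (omega \<alpha> \<epsilon> - 1) / of_int p" using hp2 p0 by (simp add: field_simps)
  hence "\<nu> / omega \<alpha> \<epsilon> = (1 - 1 / omega \<alpha> \<epsilon>) / of_int p" using om p0 by (simp add: field_simps)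
  hence "\<nu> / omega \<alpha> \<epsilon> = (1 - \<epsilon> powr ((\<alpha> + 1) / 2)) / of_int p" unfolding inv .
  with P1 show "(\<forall>x \<tau>. hfun n \<alpha> m a \<epsilon> \<nu> x (\<tau> + 2 * pi) = hfun n \<alpha> m a \<epsilon> \<nu> x \<tau>)
        \<and> \<nu> / omega \<alpha> \<epsilon> = (1 - \<epsilon> powr ((\<alpha> + 1) / 2)) / of_int p" by blast
next
  fix R :: real
  define d where "d = Min ((\<lambda>j. norm (a 1 - a j)) ` {2..n})"
  have fin: "finite ((\<lambda>j. norm (a 1 - a j)) ` {2..n})" by simp
  have ne: "(\<lambda>j. norm (a 1 - a j)) ` {2..n} \<noteq> {}" using n2 by auto
  have dj: "d \<le> norm (a 1 - a j)" if "j \<in> {2..n}" for j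
    unfolding d_def using fin that by (intro Min_le) auto
  have dpos: "d > 0"
  proof -
    have "d \<in> (\<lambda>j. norm (a 1 - a j)) ` {2..n}" unfolding d_def using fin ne by (rule Min_in)
    then obtain j where j: "j \<in> {2..n}" and dj: "d = norm (a 1 - a j)" by auto
    have "a 1 \<noteq> a j" using distinct j n2 by auto
    thus ?thesis using dj by simp
  qed
  define \<rho> where "\<rho> = d / 2"
  have rho: "\<rho> > 0" using dpos by (simp add: \<rho>_def)
  define L where "L = (\<alpha>+2) * \<rho> powr (-(\<alpha>+1))"
  have L0: "L \<ge> 0" using alpha by (simp add: L_def)
  define R1 where "R1 = \<bar>R\<bar> + 1"
  have R1: "R1 > 0" by (simp add: R1_def)
  define M where "M = (\<Sum>j\<in>{2..n}. \<bar>m j\<bar>)"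
  define C where "C = M * L * R1"
  define \<epsilon>0 where "\<epsilon>0 = \<rho> / R1"
  show "\<exists>C \<epsilon>0. \<epsilon>0 > 0 \<and>
          (\<forall>\<epsilon> \<nu> (p::int) x \<tau>. 0 < \<epsilon> \<and> \<epsilon> < \<epsilon>0 \<and> \<epsilon> < 1 \<and> \<nu> > 0
             \<and> (omega \<alpha> \<epsilon> - 1) / \<nu> = of_int p \<and> norm x \<le> R \<longrightarrow>
             (\<exists>g. GDERIV (\<lambda>z. hfun n \<alpha> m a \<epsilon> \<nu> z \<tau>) x :> g
                  \<and> norm g \<le> C * \<epsilon> powr (\<alpha> + 1)))"
  proof (intro exI conjI)
    show "\<epsilon>0 > 0" using rho R1 by (simp add: \<epsilon>0_def)
  next
   show "\<forall>\<epsilon> \<nu> (p::int) x \<tau>. 0 < \<epsilon> \<and> \<epsilon> < \<epsilon>0 \<and> \<epsilon> < 1 \<and> \<nu> > 0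
             \<and> (omega \<alpha> \<epsilon> - 1) / \<nu> = of_int p \<and> norm x \<le> R \<longrightarrow>
             (\<exists>g. GDERIV (\<lambda>z. hfun n \<alpha> m a \<epsilon> \<nu> z \<tau>) x :> g
                  \<and> norm g \<le> C * \<epsilon> powr (\<alpha> + 1))"
   proof (intro allI impI)
    fix \<epsilon> \<nu> :: real and p :: int and x :: "real^2" and \<tau> :: real
    assume H: "0 < \<epsilon> \<and> \<epsilon> < \<epsilon>0 \<and> \<epsilon> < 1 \<and> \<nu> > 0 \<and> (omega \<alpha> \<epsilon> - 1) / \<nu> = of_int p \<and> norm x \<le> R"
    hence e0: "0 < \<epsilon>" and e1: "\<epsilon> < \<epsilon>0" and nu: "\<nu> > 0" and hp: "(omega \<alpha> \<epsilon> - 1) / \<nu> = of_int p"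
      and xR: "norm x \<le> R" by auto
    define y where "y = (\<lambda>j. ypos \<alpha> a \<epsilon> \<nu> j \<tau>)"
    have ny: "norm (y j) = norm (a 1 - a j)" for j
      unfolding y_def ypos_eq[OF nu hp] norm_rotJ ..
    have xR1: "norm x \<le> R1" using xR by (simp add: R1_def)
    have exs: "\<epsilon> * norm x \<le> \<rho>"
    proof -
      have "\<epsilon> * norm x \<le> \<epsilon> * R1" using xR1 e0 by (simp add: mult_left_mono)
      also have "\<dots> \<le> \<epsilon>0 * R1" using e1 R1 by simp
      also have "\<dots> = \<rho>" using R1 by (simp add: \<epsilon>0_def)
      finally show ?thesis .
    qed
    have yj: "norm (y j) \<ge> 2 * \<rho>" if "j \<in> {2..n}" for j
      using dj[OF that] ny[of j] by (simp add: \<rho>_def)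
    have ynz: "y j \<noteq> 0" if "j \<in> {2..n}" for j using yj[OF that] rho by auto
    have wnz: "y j + \<epsilon> *\<^sub>R x \<noteq> 0" if "j \<in> {2..n}" for j
    proof
      assume "y j + \<epsilon> *\<^sub>R x = 0"
      hence "y j = - (\<epsilon> *\<^sub>R x)" by (simp add: eq_neg_iff_add_eq_0)
      hence "norm (y j) = \<epsilon> * norm x" using e0 by simp
      thus False using yj[OF that] exs rho by linarith
    qed
    define D where "D = (\<lambda>j. \<epsilon> *\<^sub>R (Gf \<alpha> (y j) - Gf \<alpha> (y j + \<epsilon> *\<^sub>R x)))"
    have Db: "norm (D j) \<le> L * R1 * \<epsilon> * \<epsilon>" if "j \<in> {2..n}" for j
    proof -
      have "norm (Gf \<alpha> (y j) - Gf \<alpha> (y j + \<epsilon> *\<^sub>R x)) \<le> L * norm ((y j + \<epsilon> *\<^sub>R x) - y j)"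
        unfolding L_def by (rule Gf_lip[OF alpha rho yj[OF that]]) (use exs e0 in simp)
      also have "\<dots> = L * (\<epsilon> * norm x)" using e0 by simp
      also have "\<dots> \<le> L * (\<epsilon> * R1)" using L0 e0 xR1 by (intro mult_left_mono) auto
      finally show ?thesis unfolding D_def using e0 by (simp add: mult_left_mono mult_ac)
    qed
    define g where "g = (if \<alpha> > 1 then (\<Sum>j\<in>{2..n}. (\<epsilon> powr (\<alpha> - 1) * m j) *\<^sub>R D j)
                        else (\<Sum>j\<in>{2..n}. m j *\<^sub>R D j))"
    have gd: "GDERIV (\<lambda>z. hfun n \<alpha> m a \<epsilon> \<nu> z \<tau>) x :> g"
    proof (cases "\<alpha> > 1")
      case True
      have fe: "(\<lambda>z. hfun n \<alpha> m a \<epsilon> \<nu> z \<tau>) = (\<lambda>z. \<epsilon> powr (\<alpha> - 1) * (\<Sum>j\<in>{2..n}. m j *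
         (phi \<alpha> (norm (y j + \<epsilon> *\<^sub>R z))
          + ((1 / norm (y j) powr (\<alpha> + 1)) *\<^sub>R y j) \<bullet> (\<epsilon> *\<^sub>R z))))"
        unfolding hfun_def y_def using True by simp
      have "((\<lambda>z. \<epsilon> powr (\<alpha> - 1) * (\<Sum>j\<in>{2..n}. m j *
         (phi \<alpha> (norm (y j + \<epsilon> *\<^sub>R z))
          + ((1 / norm (y j) powr (\<alpha> + 1)) *\<^sub>R y j) \<bullet> (\<epsilon> *\<^sub>R z)))) has_derivative
          (\<lambda>h. \<epsilon> powr (\<alpha> - 1) * (\<Sum>j\<in>{2..n}. m j * (h \<bullet> D j)))) (at x)"
        unfolding D_def
        by (intro has_derivative_mult_right has_derivative_sum summand_gt wnz ynz True)
      moreover have "(\<lambda>h. \<epsilon> powr (\<alpha> - 1) * (\<Sum>j\<in>{2..n}. m j * (h \<bullet> D j))) = (\<lambda>h. h \<bullet> g)"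
        unfolding g_def using True by (simp add: inner_sum_right sum_distrib_left mult_ac)
      ultimately show ?thesis unfolding gderiv_def fe by simp
    next
      case False
      hence a1: "\<alpha> = 1" using alpha by simp
      have fe: "(\<lambda>z. hfun n \<alpha> m a \<epsilon> \<nu> z \<tau>) = (\<lambda>z. (\<Sum>j\<in>{2..n}. m j *
         (- ln (norm (y j + \<epsilon> *\<^sub>R z) / norm (y j))
          + ((1 / norm (y j)^2) *\<^sub>R y j) \<bullet> (\<epsilon> *\<^sub>R z))))"
        unfolding hfun_def y_def using False by simp
      have "((\<lambda>z. (\<Sum>j\<in>{2..n}. m j *
         (- ln (norm (y j + \<epsilon> *\<^sub>R z) / norm (y j))
          + ((1 / norm (y j)^2) *\<^sub>R y j) \<bullet> (\<epsilon> *\<^sub>R z)))) has_derivative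
          (\<lambda>h. (\<Sum>j\<in>{2..n}. m j * (h \<bullet> D j)))) (at x)"
        unfolding D_def a1
        by (intro has_derivative_sum has_derivative_mult_right summand_eq1 wnz ynz)
      moreover have "(\<lambda>h. (\<Sum>j\<in>{2..n}. m j * (h \<bullet> D j))) = (\<lambda>h. h \<bullet> g)"
        unfolding g_def using False by (simp add: inner_sum_right)
      ultimately show ?thesis unfolding gderiv_def fe by simp
    qed
    have gb: "norm g \<le> C * \<epsilon> powr (\<alpha> + 1)"
    proof (cases "\<alpha> > 1")
      case True
      have "norm g \<le> (\<Sum>j\<in>{2..n}. norm ((\<epsilon> powr (\<alpha> - 1) * m j) *\<^sub>R D j))"
        unfolding g_def if_P[OF True] by (rule norm_sum)
      also have "\<dots> \<le> (\<Sum>j\<in>{2..n}. \<bar>m j\<bar> * (L * R1 * \<epsilon> powr (\<alpha> + 1)))"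
      proof (rule sum_mono)
        fix j assume j: "j \<in> {2..n}"
        have ep: "\<epsilon> powr (\<alpha> - 1) * (\<epsilon> * \<epsilon>) = \<epsilon> powr (\<alpha> + 1)"
        proof -
          have "\<epsilon> powr (\<alpha> - 1) * \<epsilon> powr 2 = \<epsilon> powr (\<alpha> - 1 + 2)" by (rule powr_add[symmetric])
          thus ?thesis using e0 by (simp add: powr_numeral power2_eq_square add.commute)
        qed
        have "norm ((\<epsilon> powr (\<alpha> - 1) * m j) *\<^sub>R D j) = \<epsilon> powr (\<alpha> - 1) * \<bar>m j\<bar> * norm (D j)"
          by (simp add: abs_mult)
        also have "\<dots> \<le> \<epsilon> powr (\<alpha> - 1) * \<bar>m j\<bar> * (L * R1 * \<epsilon> * \<epsilon>)"
          by (intro mult_left_mono Db j) auto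
        also have "\<dots> = \<bar>m j\<bar> * (L * R1 * (\<epsilon> powr (\<alpha> - 1) * (\<epsilon> * \<epsilon>)))" by (simp add: mult_ac)
        finally show "norm ((\<epsilon> powr (\<alpha> - 1) * m j) *\<^sub>R D j) \<le> \<bar>m j\<bar> * (L * R1 * \<epsilon> powr (\<alpha> + 1))"
          unfolding ep .
      qed
      also have "\<dots> = C * \<epsilon> powr (\<alpha> + 1)" unfolding C_def M_def sum_distrib_right by (rule sum.cong) (simp_all add: mult_ac)
      finally show ?thesis .
    next
      case False
      hence a1: "\<alpha> = 1" using alpha by simp
      have ep: "\<epsilon> * \<epsilon> = \<epsilon> powr (\<alpha> + 1)" using e0 a1 by (simp add: powr_numeral power2_eq_square)
      have "norm g \<le> (\<Sum>j\<in>{2..n}. norm (m j *\<^sub>R D j))"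
        unfolding g_def if_not_P[OF False] by (rule norm_sum)
      also have "\<dots> \<le> (\<Sum>j\<in>{2..n}. \<bar>m j\<bar> * (L * R1 * \<epsilon> powr (\<alpha> + 1)))"
      proof (rule sum_mono)
        fix j assume j: "j \<in> {2..n}"
        have "norm (m j *\<^sub>R D j) = \<bar>m j\<bar> * norm (D j)" by simp
        also have "\<dots> \<le> \<bar>m j\<bar> * (L * R1 * \<epsilon> * \<epsilon>)" by (intro mult_left_mono Db j) auto
        finally show "norm (m j *\<^sub>R D j) \<le> \<bar>m j\<bar> * (L * R1 * \<epsilon> powr (\<alpha> + 1))"
          unfolding ep[symmetric] by (simp add: mult_ac)
      qed
      also have "\<dots> = C * \<epsilon> powr (\<alpha> + 1)" unfolding C_def M_def sum_distrib_right by (rule sum.cong) (simp_all add: mult_ac)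
      finally show ?thesis .
    qed
    show "\<exists>g. GDERIV (\<lambda>z. hfun n \<alpha> m a \<epsilon> \<nu> z \<tau>) x :> g \<and> norm g \<le> C * \<epsilon> powr (\<alpha> + 1)"
      using gd gb by blast
   qed
  qed
qed

end
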